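(* Let $\gamma\in(0,1)$ and consider the following networked Markov game $MG$ with 4 agents $\mathcal N=\{1,2,3,4\}$ on the path graph with edges $\{(1,2),(2,3),(3,4)\}$. Each agent has local state space $\mathcal S_i=\{s_b,s_g\}$ and local action space $\mathcal A_i=\{a_b,a_g\}$. All agents start in $s_b$ at time $0$. Transitions are deterministic: $s_1(t+1)=s_g$ if $a_1(t)=a_g$ and $s_1(t+1)=s_b$ if $a_1(t)=a_b$; for $i\in\{2,3,4\}$, $s_i(t+1)=s_{i-1}(t)$. Rewards: $r_1=r_2=r_3\equiv0$, and $r_4(s_4,a_4)=1$ if $(s_4,a_4)=(s_g,a_g)$ and $0$ otherwise. Policies are local stationary policies $\xi_i:\mathcal S_i\to\Delta(\mathcal A_i)$. Then $MG$ is a $1$-NMPG, but it is not a Markov potential game.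
   Context: With $J_i(\xi)=\sum_{t\ge0}\gamma^t\mathbb E_\xi[r_i(s(t),a(t))]$, $\Xi_i$ the local policies of agent $i$ and $\Xi=\prod_i\Xi_i$: the game is a $\kappa_G$-NMPG if there are functions $\Phi_i:\Xi\to\mathbb R$, $i\in\mathcal N$, such that for every $i\in\mathcal N$, every $j$ with graph distance $\mathrm{dist}(i,j)\le\kappa_G$, all $\xi_j,\xi_j'\in\Xi_j$ and $\xi_{-j}\in\Xi_{-j}$: $J_j(\xi_j',\xi_{-j})-J_j(\xi_j,\xi_{-j})=\Phi_i(\xi_j',\xi_{-j})-\Phi_i(\xi_j,\xi_{-j})$. The game is a Markov potential game (MPG) if there is a single $\Phi:\Xi\to\mathbb R$ with $J_i(\xi_i',\xi_{-i})-J_i(\xi_i,\xi_{-i})=\Phi(\xi_i',\xi_{-i})-\Phi(\xi_i,\xi_{-i})$ for all $i$, $\xi_i,\xi_i'\in\Xi_i$, $\xi_{-i}\in\Xi_{-i}$. *)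

theory Defs
  imports "HOL-Probability.Probability"
begin

text \<open>Agents are of type 'i, local policies of type 'p; the agent set is N and the set of
  local policies of agent i is Xi i.  J i xi is the value of agent i under joint policy xi.\<close>

definition is_NMPG ::
  "'i set \<Rightarrow> ('i \<Rightarrow> 'p set) \<Rightarrow> ('i \<Rightarrow> 'i \<Rightarrow> nat) \<Rightarrow> nat \<Rightarrow> ('i \<Rightarrow> ('i \<Rightarrow> 'p) \<Rightarrow> real) \<Rightarrow> bool"
  where
  "is_NMPG N Xi d \<kappa> J \<longleftrightarrow>
     (\<exists>\<Phi> :: 'i \<Rightarrow> ('i \<Rightarrow> 'p) \<Rightarrow> real.
        \<forall>i\<in>N. \<forall>j\<in>N. d i j \<le> \<kappa> \<longrightarrow>
          (\<forall>\<xi>\<in>PiE N Xi. \<forall>p\<in>Xi j.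
             J j (\<xi>(j := p)) - J j \<xi> = \<Phi> i (\<xi>(j := p)) - \<Phi> i \<xi>))"

definition is_MPG ::
  "'i set \<Rightarrow> ('i \<Rightarrow> 'p set) \<Rightarrow> ('i \<Rightarrow> ('i \<Rightarrow> 'p) \<Rightarrow> real) \<Rightarrow> bool"
  where
  "is_MPG N Xi J \<longleftrightarrow>
     (\<exists>\<Phi> :: ('i \<Rightarrow> 'p) \<Rightarrow> real.
        \<forall>i\<in>N. \<forall>\<xi>\<in>PiE N Xi. \<forall>p\<in>Xi i.
             J i (\<xi>(i := p)) - J i \<xi> = \<Phi> (\<xi>(i := p)) - \<Phi> \<xi>)"

definition gdist :: "('a \<Rightarrow> 'a \<Rightarrow> bool) \<Rightarrow> 'a \<Rightarrow> 'a \<Rightarrow> nat" where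
  "gdist E i j = (LEAST n. ((\<lambda>x y. E x y \<or> E y x) ^^ n) i j)"

datatype lstate = Sb | Sg
datatype lact = Ab | Ag

type_synonym jstate = "nat \<Rightarrow> lstate"
type_synonym jact = "nat \<Rightarrow> lact"
type_synonym lpolicy = "lstate \<Rightarrow> lact pmf"
type_synonym jpolicy = "nat \<Rightarrow> lpolicy"

definition agents :: "nat set" where "agents = {1,2,3,4}"

definition pathE :: "nat \<Rightarrow> nat \<Rightarrow> bool" where
  "pathE i j \<longleftrightarrow> (i, j) \<in> {(1,2),(2,3),(3,4)}"

definition init_state :: jstate where "init_state = (\<lambda>_. Sb)"

definition trans :: "jstate \<Rightarrow> jact \<Rightarrow> jstate" where
  "trans s a = (\<lambda>i. if i = 1 then (if a 1 = Ag then Sg else Sb)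
                    else if i \<in> {2,3,4} then s (i - 1) else s i)"

definition reward :: "nat \<Rightarrow> jstate \<Rightarrow> jact \<Rightarrow> real" where
  "reward i s a = (if i = 4 \<and> s 4 = Sg \<and> a 4 = Ag then 1 else 0)"

definition act_dist :: "jpolicy \<Rightarrow> jstate \<Rightarrow> jact pmf" where
  "act_dist \<xi> s = Pi_pmf agents Ab (\<lambda>i. \<xi> i (s i))"

fun state_dist :: "jpolicy \<Rightarrow> nat \<Rightarrow> jstate pmf" where
  "state_dist \<xi> 0 = return_pmf init_state"
| "state_dist \<xi> (Suc t) = bind_pmf (state_dist \<xi> t) (\<lambda>s. map_pmf (trans s) (act_dist \<xi> s))"

definition sa_dist :: "jpolicy \<Rightarrow> nat \<Rightarrow> (jstate \<times> jact) pmf" where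
  "sa_dist \<xi> t = bind_pmf (state_dist \<xi> t) (\<lambda>s. map_pmf (\<lambda>a. (s, a)) (act_dist \<xi> s))"

definition exp_reward :: "nat \<Rightarrow> jpolicy \<Rightarrow> nat \<Rightarrow> real" where
  "exp_reward i \<xi> t = measure_pmf.expectation (sa_dist \<xi> t) (\<lambda>(s, a). reward i s a)"

definition J :: "real \<Rightarrow> nat \<Rightarrow> jpolicy \<Rightarrow> real" where
  "J \<gamma> i \<xi> = (\<Sum>t. \<gamma> ^ t * exp_reward i \<xi> t)"

end

theory Submission
  imports Defs
begin

definition tr :: "jstate \<Rightarrow> lact \<Rightarrow> jstate" where
  "tr s x = trans s (\<lambda>_. x)"

lemma trans_tr: "trans s a = tr s (a 1)"
  unfolding tr_def trans_def by auto

lemma fin_agents: "finite agents" by (simp add: agents_def)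

lemma act_comp: "i \<in> agents \<Longrightarrow> map_pmf (\<lambda>a. a i) (act_dist \<xi> s) = \<xi> i (s i)"
  unfolding act_dist_def using Pi_pmf_component[OF fin_agents, of i Ab "\<lambda>i. \<xi> i (s i)"] by simp

lemma step_eq: "map_pmf (trans s) (act_dist \<xi> s) = map_pmf (tr s) (\<xi> 1 (s 1))"
proof -
  have e: "trans s = (\<lambda>a. tr s (a 1))" by (rule ext) (simp add: trans_tr)
  have "map_pmf (trans s) (act_dist \<xi> s) = map_pmf (tr s) (map_pmf (\<lambda>a. a 1) (act_dist \<xi> s))"
    by (simp add: map_pmf_comp e)
  also have "\<dots> = map_pmf (tr s) (\<xi> 1 (s 1))" by (simp add: act_comp agents_def)
  finally show ?thesis .
qed

lemma state_dist_eq: "\<xi> 1 = \<xi>' 1 \<Longrightarrow> state_dist \<xi> t = state_dist \<xi>' t"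
  by (induction t) (simp_all add: step_eq)

lemma sa4: "map_pmf (\<lambda>(s,a). (s, a 4)) (sa_dist \<xi> t)
   = bind_pmf (state_dist \<xi> t) (\<lambda>s. map_pmf (\<lambda>x. (s,x)) (\<xi> 4 (s 4)))"
proof -
  have "map_pmf (\<lambda>(s,a). (s, a 4)) (sa_dist \<xi> t)
     = bind_pmf (state_dist \<xi> t) (\<lambda>s. map_pmf (\<lambda>x. (s,x)) (map_pmf (\<lambda>a. a 4) (act_dist \<xi> s)))"
    unfolding sa_dist_def by (simp add: map_bind_pmf map_pmf_comp)
  also have "\<dots> = bind_pmf (state_dist \<xi> t) (\<lambda>s. map_pmf (\<lambda>x. (s,x)) (\<xi> 4 (s 4)))"
    by (simp add: act_comp agents_def)
  finally show ?thesis .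
qed

definition g4 :: "jstate \<times> lact \<Rightarrow> real" where
  "g4 = (\<lambda>(s,x). if s 4 = Sg \<and> x = Ag then 1 else 0)"

lemma exp4: "exp_reward 4 \<xi> t = measure_pmf.expectation
   (bind_pmf (state_dist \<xi> t) (\<lambda>s. map_pmf (\<lambda>x. (s,x)) (\<xi> 4 (s 4)))) g4"
proof -
  have "exp_reward 4 \<xi> t = measure_pmf.expectation (map_pmf (\<lambda>(s,a). (s, a 4)) (sa_dist \<xi> t)) g4"
  proof -
    have "(\<lambda>(s::jstate,a::jact). reward 4 s a) = (\<lambda>x. g4 ((\<lambda>(s,a). (s, a 4)) x))"
      by (auto simp: g4_def reward_def fun_eq_iff)
    then show ?thesis unfolding exp_reward_def by simp
  qed
  then show ?thesis by (simp add: sa4)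
qed

lemma J4_eq: "\<xi> 1 = \<xi>' 1 \<Longrightarrow> \<xi> 4 = \<xi>' 4 \<Longrightarrow> J \<gamma> 4 \<xi> = J \<gamma> 4 \<xi>'"
  unfolding J_def by (simp add: exp4 state_dist_eq[of \<xi> \<xi>'])

lemma J_other: "i \<noteq> 4 \<Longrightarrow> J \<gamma> i \<xi> = 0"
proof -
  assume "i \<noteq> 4"
  then have "(\<lambda>(s::jstate,a::jact). reward i s a) = (\<lambda>_. 0)" by (auto simp: reward_def)
  then show ?thesis unfolding J_def exp_reward_def by simp
qed

lemma least_ge2:
  assumes "(R^^n) a b" "\<not> (R^^0) a b" "\<not> (R^^1) a b"
  shows "2 \<le> (LEAST n. (R^^n) a b)"
proof -
  define L where "L = (LEAST n. (R^^n) a b)"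
  have h: "(R^^L) a b" unfolding L_def by (rule LeastI[of _ n]) (rule assms(1))
  have "L \<noteq> 0" proof assume "L = 0" with h assms(2) show False by simp qed
  moreover have "L \<noteq> 1" proof assume "L = 1" with h assms(3) show False by simp qed
  ultimately show ?thesis unfolding L_def[symmetric] by linarith
qed

lemma gd14: "2 \<le> gdist pathE 1 4"
  unfolding gdist_def
  apply (rule least_ge2[where n=3])
  apply (auto simp: pathE_def numeral_3_eq_3 OO_def)
  done

lemma gd24: "2 \<le> gdist pathE 2 4"
  unfolding gdist_def
  apply (rule least_ge2[where n=2])
  apply (auto simp: pathE_def numeral_2_eq_2 OO_def)
  done

lemma gd31: "2 \<le> gdist pathE 3 1"
  unfolding gdist_def
  apply (rule least_ge2[where n=2])
  apply (auto simp: pathE_def numeral_2_eq_2 OO_def)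
  done

lemma gd41: "2 \<le> gdist pathE 4 1"
  unfolding gdist_def
  apply (rule least_ge2[where n=3])
  apply (auto simp: pathE_def numeral_3_eq_3 OO_def)
  done

definition stG :: "nat \<Rightarrow> jstate" where
  "stG t = (\<lambda>i. if i \<in> {1,2,3,4} \<and> i \<le> t then Sg else Sb)"

lemma sdG: "\<xi> 1 = (\<lambda>_. return_pmf Ag) \<Longrightarrow> state_dist \<xi> t = return_pmf (stG t)"
proof (induction t)
  case 0 then show ?case by (auto simp: stG_def init_state_def fun_eq_iff)
next
  case (Suc t)
  have "tr (stG t) Ag = stG (Suc t)"
    by (auto simp: tr_def trans_def stG_def fun_eq_iff)
  then show ?case using Suc by (simp add: step_eq bind_return_pmf)
qed

lemma sdB: "\<xi> 1 = (\<lambda>_. return_pmf Ab) \<Longrightarrow> state_dist \<xi> t = return_pmf init_state"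
proof (induction t)
  case 0 then show ?case by simp
next
  case (Suc t)
  have "tr init_state Ab = init_state"
    by (auto simp: tr_def trans_def init_state_def fun_eq_iff)
  then show ?case using Suc by (simp add: step_eq bind_return_pmf)
qed

lemma J_B1: "\<xi> 1 = (\<lambda>_. return_pmf Ab) \<Longrightarrow> J \<gamma> 4 \<xi> = 0"
  unfolding J_def by (simp add: exp4 bind_return_pmf sdB g4_def init_state_def)

lemma J_B4: "\<xi> 1 = (\<lambda>_. return_pmf Ag) \<Longrightarrow> \<xi> 4 = (\<lambda>_. return_pmf Ab) \<Longrightarrow> J \<gamma> 4 \<xi> = 0"
  unfolding J_def by (simp add: exp4 bind_return_pmf sdG g4_def)

lemma J_GG:
  assumes "0 < \<gamma>" "\<gamma> < 1" "\<xi> 1 = (\<lambda>_. return_pmf Ag)" "\<xi> 4 = (\<lambda>_. return_pmf Ag)"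
  shows "0 < J \<gamma> 4 \<xi>"
proof -
  have e: "exp_reward 4 \<xi> t = (if 4 \<le> t then 1 else 0)" for t
    using assms(3,4) by (simp add: exp4 bind_return_pmf sdG g4_def stG_def)
  have sg: "summable (\<lambda>t. \<gamma> ^ t)" using assms by (simp add: summable_geometric)
  have sm: "summable (\<lambda>t. \<gamma> ^ t * exp_reward 4 \<xi> t)"
    by (rule summable_comparison_test[OF _ sg]) (use assms in \<open>auto simp: e\<close>)
  show ?thesis unfolding J_def
    by (rule suminf_pos2[OF sm, of 4]) (use assms in \<open>auto simp: e\<close>)
qed

theorem mainTheorem4:
  fixes \<gamma> :: real
  assumes "0 < \<gamma>" and "\<gamma> < 1"
  shows "is_NMPG agents (\<lambda>_. UNIV) (gdist pathE) 1 (J \<gamma>) \<and>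
         \<not> is_MPG agents (\<lambda>_. UNIV) (J \<gamma>)"
proof
  show "is_NMPG agents (\<lambda>_. UNIV) (gdist pathE) 1 (J \<gamma>)"
    unfolding is_NMPG_def
  proof (intro exI[of _ "\<lambda>i \<xi>. if i \<in> {3,4} then J \<gamma> 4 \<xi> else 0"] ballI impI)
    fix i j \<xi> p
    assume i: "i \<in> agents" and j: "j \<in> agents" and d: "gdist pathE i j \<le> 1"
    show "J \<gamma> j (\<xi>(j := p)) - J \<gamma> j \<xi> =
          (if i \<in> {3,4} then J \<gamma> 4 (\<xi>(j := p)) else 0) - (if i \<in> {3,4} then J \<gamma> 4 \<xi> else 0)"
    proof (cases "i \<in> {3,4}")
      case True
      then have "j \<noteq> 1" using d gd31 gd41 by auto
      then have "j \<in> {2,3,4}" using j by (auto simp: agents_def)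
      then show ?thesis using True
        by (auto simp: J_other intro!: J4_eq)
    next
      case False
      then have "i \<in> {1,2}" using i by (auto simp: agents_def)
      then have "j \<noteq> 4" using d gd14 gd24 by auto
      then show ?thesis using False by (simp add: J_other)
    qed
  qed
next
  show "\<not> is_MPG agents (\<lambda>_. UNIV) (J \<gamma>)"
  proof
    assume "is_MPG agents (\<lambda>_. UNIV) (J \<gamma>)"
    then obtain \<Phi> where H: "\<And>i \<xi> p. i \<in> agents \<Longrightarrow> \<xi> \<in> PiE agents (\<lambda>_. UNIV) \<Longrightarrow>
        J \<gamma> i (\<xi>(i := p)) - J \<gamma> i \<xi> = \<Phi> (\<xi>(i := p)) - \<Phi> \<xi>"
      unfolding is_MPG_def by blast
    define B :: lpolicy where "B = (\<lambda>_. return_pmf Ab)"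
    define G :: lpolicy where "G = (\<lambda>_. return_pmf Ag)"
    define z :: jpolicy where "z = restrict (\<lambda>_. B) agents"
    have a1: "(1::nat) \<in> agents" and a4: "(4::nat) \<in> agents" by (auto simp: agents_def)
    have zP: "z \<in> PiE agents (\<lambda>_. UNIV)" by (simp add: z_def)
    have z4P: "z(4 := G) \<in> PiE agents (\<lambda>_. UNIV)" using zP a4
      by (metis PiE_fun_upd UNIV_I insert_absorb)
    have z1P: "z(1 := G) \<in> PiE agents (\<lambda>_. UNIV)" using zP a1
      by (metis PiE_fun_upd UNIV_I insert_absorb)
    have tw: "z(4 := G, 1 := G) = z(1 := G, 4 := G)" by (rule fun_upd_twist) simp
    have e1: "0 = \<Phi> (z(1 := G, 4 := G)) - \<Phi> (z(4 := G))"
      using H[OF a1 z4P, of G] tw by (simp add: J_other)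
    have e2: "J \<gamma> 4 (z(4 := G)) - J \<gamma> 4 z = \<Phi> (z(4 := G)) - \<Phi> z"
      using H[OF a4 zP, of G] .
    have e3: "J \<gamma> 4 (z(1 := G, 4 := G)) - J \<gamma> 4 (z(1 := G)) = \<Phi> (z(1 := G, 4 := G)) - \<Phi> (z(1 := G))"
      using H[OF a4 z1P, of G] .
    have e4: "0 = \<Phi> (z(1 := G)) - \<Phi> z"
      using H[OF a1 zP, of G] by (simp add: J_other)
    have v1: "J \<gamma> 4 (z(4 := G)) = 0" by (rule J_B1) (simp add: z_def B_def agents_def)
    have v2: "J \<gamma> 4 z = 0" by (rule J_B1) (simp add: z_def B_def agents_def)
    have v3: "J \<gamma> 4 (z(1 := G)) = 0" by (rule J_B4) (simp_all add: z_def B_def G_def agents_def)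
    have v4: "0 < J \<gamma> 4 (z(1 := G, 4 := G))"
      by (rule J_GG[OF assms]) (simp_all add: z_def G_def)
    show False using e1 e2 e3 e4 v1 v2 v3 v4 by linarith
  qed
qed

end
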